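(* For every $d\in\mathbb{N}$ and every game $\mathcal{M}\subseteq\mathbb{N}_0^d$, the sequence $(\mathcal{M}^i)_{i\ge0}$ converges, i.e. the limit game $\mathcal{M}^\infty$ exists, and $\mathcal{M}^\infty$ is reflexive.
   Context: For $d\in\mathbb{N}$ a game is a set $\mathcal{M}\subseteq\mathbb{N}_0^d$ of moves. From position $\boldsymbol x\in\mathbb{N}_0^d$ a player may move to $\boldsymbol y\in\mathbb{N}_0^d$ iff $\boldsymbol x-\boldsymbol y\in\mathcal{M}$. Misère play: a player who cannot move wins. If $\boldsymbol 0\in\mathcal{M}$, $P(\mathcal{M})=\varnothing$. Otherwise: a position is an N-position if it has no option or some option is a P-position; otherwise it is a P-position; $P(\mathcal{M})$ denotes the set of P-positions. The $\star$-operator is $\mathcal{M}^\star=P(\mathcal{M})$; $\mathcal{M}^0=\mathcal{M}$, $\mathcal{M}^i=(\mathcal{M}^{i-1})^\star$. The limit $\mathcal{M}^\infty$ exists if for every $\boldsymbol x\in\mathbb{N}_0^d$ either $\boldsymbol x\in\mathcal{M}^i$ for all sufficiently large $i$ or $\boldsymbol x\notin\mathcal{M}^i$ for all sufficiently large $i$; then $\mathcal{M}^\infty$ is the set of $\boldsymbol x$ of the first kind. A game is reflexive if $\mathcal{M}=\mathcal{M}^\star$. *)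

theory Defs
  imports Main
begin

text \<open>Positions in N_0^d are functions from a finite index type 'd (with d = CARD('d) \<ge> 1)
  to nat. From x one may move to y iff x - y \<in> M
  (componentwise, with y \<le> x componentwise so that the difference lies in N_0^d).\<close>

definition is_option :: "('d \<Rightarrow> nat) set \<Rightarrow> ('d \<Rightarrow> nat) \<Rightarrow> ('d \<Rightarrow> nat) \<Rightarrow> bool" where
  "is_option M x y \<longleftrightarrow> (\<forall>i. y i \<le> x i) \<and> (\<lambda>i. x i - y i) \<in> M"

text \<open>Strict option relation (well-founded: coordinate sums strictly decrease).\<close>
definition option_rel :: "('d::finite \<Rightarrow> nat) set \<Rightarrow> (('d \<Rightarrow> nat) \<times> ('d \<Rightarrow> nat)) set" where
  "option_rel M = {(y, x). is_option M x y \<and> y \<noteq> x}"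

text \<open>Misere P-position predicate, by well-founded recursion: x is a P-position iff
  x has an option and no option of x is a P-position (for 0 \<notin> M every option is strict).\<close>
definition is_P :: "('d::finite \<Rightarrow> nat) set \<Rightarrow> ('d \<Rightarrow> nat) \<Rightarrow> bool" where
  "is_P M = wfrec (option_rel M)
     (\<lambda>f x. (\<exists>y. is_option M x y) \<and> (\<forall>y. is_option M x y \<and> y \<noteq> x \<longrightarrow> \<not> f y))"

definition Ppos :: "('d::finite \<Rightarrow> nat) set \<Rightarrow> ('d \<Rightarrow> nat) set" where
  "Ppos M = (if (\<lambda>_. 0) \<in> M then {} else {x. is_P M x})"

definition star_game :: "('d::finite \<Rightarrow> nat) set \<Rightarrow> ('d \<Rightarrow> nat) set" where
  "star_game M = Ppos M"

definition star_iter :: "('d::finite \<Rightarrow> nat) set \<Rightarrow> nat \<Rightarrow> ('d \<Rightarrow> nat) set" where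
  "star_iter M i = (star_game ^^ i) M"

definition limit_exists :: "('d::finite \<Rightarrow> nat) set \<Rightarrow> bool" where
  "limit_exists M \<longleftrightarrow> (\<forall>x. (\<exists>N. \<forall>i\<ge>N. x \<in> star_iter M i) \<or> (\<exists>N. \<forall>i\<ge>N. x \<notin> star_iter M i))"

definition limit_game :: "('d::finite \<Rightarrow> nat) set \<Rightarrow> ('d \<Rightarrow> nat) set" where
  "limit_game M = {x. \<exists>N. \<forall>i\<ge>N. x \<in> star_iter M i}"

definition reflexive_game :: "('d::finite \<Rightarrow> nat) set \<Rightarrow> bool" where
  "reflexive_game M \<longleftrightarrow> M = star_game M"

end

theory Submission
  imports Defs "HOL-Library.FuncSet"
begin

lemma sum_less_fun:
  fixes x y :: "'d::finite \<Rightarrow> nat"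
  assumes "\<forall>i. y i \<le> x i" "y \<noteq> x"
  shows "(\<Sum>i\<in>UNIV. y i) < (\<Sum>i\<in>UNIV. x i)"
proof -
  from assms obtain j where "y j \<noteq> x j" by auto
  with assms have "y j < x j" by (metis le_neq_implies_less)
  then show ?thesis using assms by (intro sum_strict_mono_ex1) auto
qed

lemma wf_option_rel: "wf (option_rel M)"
proof (rule wf_subset[OF wf_measure[of "\<lambda>x. \<Sum>i\<in>UNIV. x i"]])
  show "option_rel M \<subseteq> measure (\<lambda>x. \<Sum>i\<in>UNIV. x i)"
    by (auto simp: option_rel_def is_option_def intro: sum_less_fun)
qed

lemma is_P_unfold:
  "is_P M x = ((\<exists>y. is_option M x y) \<and> (\<forall>y. is_option M x y \<and> y \<noteq> x \<longrightarrow> \<not> is_P M y))"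
  unfolding is_P_def
  by (subst wfrec[OF wf_option_rel]) (simp add: cut_def option_rel_def)

lemma opt_self: "is_option M x x \<longleftrightarrow> (\<lambda>_. 0) \<in> M"
  by (simp add: is_option_def)

lemma is_P_unfold0:
  assumes "(\<lambda>_. 0) \<notin> M"
  shows "is_P M x = ((\<exists>y. is_option M x y) \<and> (\<forall>y. is_option M x y \<longrightarrow> \<not> is_P M y))"
  using assms by (subst is_P_unfold) (auto simp: opt_self)

lemma not_is_P_zero:
  assumes "(\<lambda>_. 0) \<notin> M"
  shows "\<not> is_P M (\<lambda>_. 0)"
proof -
  have "\<not> is_option M (\<lambda>_. 0) y" for y
    using assms by (auto simp: is_option_def)
  then show ?thesis by (subst is_P_unfold) auto
qed

lemma zero_notin_Ppos: "(\<lambda>_. 0) \<notin> Ppos M"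
  by (simp add: Ppos_def not_is_P_zero)

definition down :: "('d \<Rightarrow> nat) \<Rightarrow> ('d \<Rightarrow> nat) set" where
  "down x = {m. \<forall>i. m i \<le> x i}"

lemma locality:
  fixes x :: "'d::finite \<Rightarrow> nat"
  assumes "(\<lambda>_. 0) \<notin> M" "(\<lambda>_. 0) \<notin> M'"
  shows "M \<inter> down x = M' \<inter> down x \<Longrightarrow> is_P M x = is_P M' x"
proof (induction x rule: measure_induct_rule[of "\<lambda>x. \<Sum>i\<in>UNIV. x i"])
  case (less x)
  have opt: "is_option M x y = is_option M' x y" for y
    using less.prems by (auto simp: is_option_def down_def set_eq_iff)
  have rec: "is_option M x y \<Longrightarrow> is_P M y = is_P M' y" for y
  proof -
    assume o: "is_option M x y"
    then have yx: "y \<noteq> x" using assms opt_self[of M x] by auto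
    have le: "\<forall>i. y i \<le> x i" using o by (simp add: is_option_def)
    show ?thesis
    proof (rule less.IH)
      show "(\<Sum>i\<in>UNIV. y i) < (\<Sum>i\<in>UNIV. x i)" using le yx by (rule sum_less_fun)
      show "M \<inter> down y = M' \<inter> down y"
      proof -
        have "down y \<subseteq> down x" using le by (auto simp: down_def intro: le_trans)
        then show ?thesis using less.prems by blast
      qed
    qed
  qed
  show ?case
    apply (subst is_P_unfold0[OF assms(1)])
    apply (subst is_P_unfold0[OF assms(2)])
    using opt rec by blast
qed

lemma finite_down: "finite (down (x :: 'd::finite \<Rightarrow> nat))"
proof (rule finite_subset)
  show "down x \<subseteq> PiE UNIV (\<lambda>i. {..x i})" by (auto simp: down_def PiE_def)
  show "finite (PiE UNIV (\<lambda>i. {..x i}))" by (rule finite_PiE) auto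
qed

lemma iter_Suc: "star_iter M (Suc i) = Ppos (star_iter M i)"
  by (simp add: star_iter_def star_game_def)

lemma iter_zero: "i \<ge> 1 \<Longrightarrow> (\<lambda>_. 0) \<notin> star_iter M i"
  by (cases i) (auto simp: iter_Suc zero_notin_Ppos)

lemma mem_Suc: "i \<ge> 1 \<Longrightarrow> x \<in> star_iter M (Suc i) \<longleftrightarrow> is_P (star_iter M i) x"
  using iter_zero[of i M] by (simp add: iter_Suc Ppos_def)

definition stab :: "(nat \<Rightarrow> bool) \<Rightarrow> bool" where
  "stab Q \<longleftrightarrow> (\<exists>N. \<forall>i\<ge>N. \<forall>j\<ge>N. Q i = Q j)"

lemma stab_finite:
  assumes "finite D" "\<forall>y\<in>D. stab (Q y)"
  shows "\<exists>N. \<forall>y\<in>D. \<forall>i\<ge>N. \<forall>j\<ge>N. Q y i = Q y j"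
  using assms
proof (induction D rule: finite_induct)
  case empty then show ?case by auto
next
  case (insert a F)
  then obtain N1 where N1: "\<forall>y\<in>F. \<forall>i\<ge>N1. \<forall>j\<ge>N1. Q y i = Q y j" by auto
  from insert.prems obtain N2 where N2: "\<forall>i\<ge>N2. \<forall>j\<ge>N2. Q a i = Q a j"
    by (auto simp: stab_def)
  show ?case
    by (rule exI[of _ "max N1 N2"]) (use N1 N2 in auto)
qed

lemma seq_stab:
  assumes "\<forall>i\<ge>N. P (Suc i) = ((C \<or> P i) \<and> B)"
  shows "stab P"
proof (cases "B \<and> \<not> C")
  case True
  have "\<forall>i\<ge>N. P i = P N"
  proof (intro allI impI)
    fix i assume "i \<ge> N"
    then show "P i = P N"
    proof (induction i rule: dec_induct)
      case base then show ?case by simp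
    next
      case (step n) then show ?case using assms True by auto
    qed
  qed
  then have "\<forall>i\<ge>N. \<forall>j\<ge>N. P i = P j" by (metis (no_types))
  then show ?thesis unfolding stab_def by blast
next
  case False
  have "\<forall>i\<ge>Suc N. P i = (C \<and> B)"
  proof (intro allI impI)
    fix i assume "Suc N \<le> i"
    then obtain k where k: "i = Suc k" "k \<ge> N" by (cases i) auto
    then have "P i = ((C \<or> P k) \<and> B)" using assms by simp
    then show "P i = (C \<and> B)" using False by blast
  qed
  then have "\<forall>i\<ge>Suc N. \<forall>j\<ge>Suc N. P i = P j" by (metis (no_types))
  then show ?thesis unfolding stab_def by blast
qed

lemma down_sub:
  assumes "\<forall>i. y i \<le> x i" "y \<noteq> x"
  shows "down y \<subseteq> down x - {x}"
proof -
  have "x \<notin> down y" using assms by (auto simp: down_def fun_eq_iff intro: le_antisym)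
  then show ?thesis using assms by (auto simp: down_def intro: le_trans)
qed

lemma main_stab:
  fixes M :: "('d::finite \<Rightarrow> nat) set"
  shows "stab (\<lambda>i. x \<in> star_iter M i)"
proof (induction x rule: measure_induct_rule[of "\<lambda>x. \<Sum>i\<in>UNIV. x i"])
  case (less x)
  define T where "T = star_iter M"
  define D where "D = down x - {x}"
  have "finite D" unfolding D_def using finite_down by blast
  moreover have "\<forall>y\<in>D. stab (\<lambda>i. y \<in> T i)"
    unfolding D_def T_def using less.IH sum_less_fun by (auto simp: down_def)
  ultimately obtain N0 where N0: "\<forall>y\<in>D. \<forall>i\<ge>N0. \<forall>j\<ge>N0. (y \<in> T i) = (y \<in> T j)"
    using stab_finite[of D "\<lambda>y i. y \<in> T i"] by blast
  define N where "N = Suc N0"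
  have TD: "i \<ge> N \<Longrightarrow> T i \<inter> D = T N \<inter> D" for i
  proof -
    assume "i \<ge> N"
    then have "N0 \<le> i" "N0 \<le> N" unfolding N_def by auto
    then show ?thesis using N0 by blast
  qed
  have Z: "i \<ge> N \<Longrightarrow> (\<lambda>_. 0) \<notin> T i" for i unfolding T_def N_def by (rule iter_zero) simp
  define C where "C = (\<exists>y. y \<noteq> (\<lambda>_. 0) \<and> is_option (T N) x y)"
  define B where "B = (\<forall>y. is_option (T N) x y \<longrightarrow> \<not> is_P (T N) y)"
  have key: "is_P (T i) x = ((C \<or> x \<in> T i) \<and> B)" if iN: "i \<ge> N" for i
  proof -
    have optD: "is_option (T j) x y \<Longrightarrow> j \<ge> N \<Longrightarrow> \<forall>k. y k \<le> x k \<and> y \<noteq> x" for j y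
      using Z[of j] opt_self[of "T j" x] by (auto simp: is_option_def)
    have opt_eq: "is_option (T i) x y = is_option (T N) x y" if "y \<noteq> (\<lambda>_. 0)" for y
    proof -
      have "(\<forall>k. y k \<le> x k) \<Longrightarrow> (\<lambda>k. x k - y k) \<in> D"
      proof -
        assume le: "\<forall>k. y k \<le> x k"
        from that obtain j where "y j \<noteq> 0" by auto
        moreover have "y j \<le> x j" using le by auto
        ultimately have "x j - y j \<noteq> x j" by arith
        then show ?thesis by (auto simp: D_def down_def fun_eq_iff)
      qed
      then show ?thesis using TD[OF iN] unfolding is_option_def by blast
    qed
    have opt0: "is_option (T j) x (\<lambda>_. 0) = (x \<in> T j)" for j
      by (simp add: is_option_def)
    have P_eq: "is_P (T i) y = is_P (T N) y" if "\<forall>k. y k \<le> x k" "y \<noteq> x" for y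
    proof (rule locality[OF Z[OF iN] Z[OF order_refl]])
      show "T i \<inter> down y = T N \<inter> down y"
        using down_sub[OF that] TD[OF iN] unfolding D_def by blast
    qed
    have P0: "\<not> is_P (T j) (\<lambda>_. 0)" if "j \<ge> N" for j by (rule not_is_P_zero[OF Z[OF that]])
    have e1: "(\<exists>y. is_option (T i) x y) = (C \<or> x \<in> T i)"
      unfolding C_def using opt_eq opt0 by metis
    have e2: "(\<forall>y. is_option (T i) x y \<longrightarrow> \<not> is_P (T i) y) = B"
      unfolding B_def using opt_eq P_eq optD[OF _ iN] optD[OF _ order_refl] P0[OF iN] P0[OF order_refl]
      by metis
    show ?thesis
      by (subst is_P_unfold0[OF Z[OF iN]]) (simp only: e1 e2)
  qed
  have "\<forall>i\<ge>N. (x \<in> T (Suc i)) = ((C \<or> x \<in> T i) \<and> B)"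
    using key unfolding T_def N_def by (auto simp: mem_Suc)
  then show ?case unfolding T_def by (rule seq_stab)
qed


lemma limit_mem:
  assumes "\<forall>i\<ge>N. \<forall>j\<ge>N. (y \<in> star_iter M i) = (y \<in> star_iter M j)" "i \<ge> N"
  shows "y \<in> limit_game M \<longleftrightarrow> y \<in> star_iter M i"
proof
  assume "y \<in> limit_game M"
  then obtain K where K: "\<forall>j\<ge>K. y \<in> star_iter M j" by (auto simp: limit_game_def)
  have "y \<in> star_iter M (max K N)" using K by simp
  moreover have "(y \<in> star_iter M (max K N)) = (y \<in> star_iter M i)"
    using assms(1)[rule_format, of "max K N" i] assms(2) by simp
  ultimately show "y \<in> star_iter M i" by simp
next
  assume "y \<in> star_iter M i"
  then have "\<forall>j\<ge>N. y \<in> star_iter M j" using assms by (metis (no_types))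
  then show "y \<in> limit_game M" by (auto simp: limit_game_def)
qed

theorem theorem3:
  fixes M :: "('d::finite \<Rightarrow> nat) set"
  shows "limit_exists M \<and> reflexive_game (limit_game M)"
proof
  show "limit_exists M"
    unfolding limit_exists_def
  proof
    fix x :: "'d \<Rightarrow> nat"
    obtain N where N: "\<forall>i\<ge>N. \<forall>j\<ge>N. (x \<in> star_iter M i) = (x \<in> star_iter M j)"
      using main_stab[of x M] by (auto simp: stab_def)
    show "(\<exists>N. \<forall>i\<ge>N. x \<in> star_iter M i) \<or> (\<exists>N. \<forall>i\<ge>N. x \<notin> star_iter M i)"
    proof (cases "x \<in> star_iter M N")
      case True
      then have "\<forall>i\<ge>N. x \<in> star_iter M i" using N by (metis order_refl)
      then show ?thesis by blast
    next
      case False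
      then have "\<forall>i\<ge>N. x \<notin> star_iter M i" using N by (metis order_refl)
      then show ?thesis by blast
    qed
  qed
next
  define L where "L = limit_game M"
  have L0: "(\<lambda>_. 0) \<notin> L"
  proof
    assume "(\<lambda>_. 0) \<in> L"
    then obtain K where "\<forall>j\<ge>K. (\<lambda>_. 0) \<in> star_iter M j" by (auto simp: L_def limit_game_def)
    then have "(\<lambda>_. 0) \<in> star_iter M (Suc K)" by simp
    then show False using iter_zero[of "Suc K" M] by simp
  qed
  have "x \<in> L \<longleftrightarrow> is_P L x" for x
  proof -
    obtain N0 where N0: "\<forall>y\<in>down x. \<forall>i\<ge>N0. \<forall>j\<ge>N0. (y \<in> star_iter M i) = (y \<in> star_iter M j)"
    proof -
      have "\<forall>y\<in>down x. stab (\<lambda>i. y \<in> star_iter M i)" using main_stab by blast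
      from stab_finite[OF finite_down this] show ?thesis using that by blast
    qed
    define N where "N = Suc N0"
    have eq: "y \<in> L \<longleftrightarrow> y \<in> star_iter M i" if "y \<in> down x" "i \<ge> N0" for y i
    proof -
      have "\<forall>i\<ge>N0. \<forall>j\<ge>N0. (y \<in> star_iter M i) = (y \<in> star_iter M j)"
        using N0 that(1) by (metis (no_types))
      then show ?thesis unfolding L_def using that(2) by (rule limit_mem)
    qed
    have "L \<inter> down x = star_iter M N \<inter> down x"
    proof (intro set_eqI iffI)
      fix y assume "y \<in> L \<inter> down x" then show "y \<in> star_iter M N \<inter> down x"
        using eq[of y N] unfolding N_def by simp
    next
      fix y assume "y \<in> star_iter M N \<inter> down x" then show "y \<in> L \<inter> down x"
        using eq[of y N] unfolding N_def by simp
    qed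
    then have "is_P L x = is_P (star_iter M N) x"
      by (intro locality[OF L0 iter_zero]) (auto simp: N_def)
    also have "\<dots> \<longleftrightarrow> x \<in> star_iter M (Suc N)" by (simp add: mem_Suc N_def)
    also have "\<dots> \<longleftrightarrow> x \<in> L" using eq[of x "Suc N"] by (simp add: N_def down_def)
    finally show ?thesis by simp
  qed
  then have "L = Ppos L" using L0 by (auto simp: Ppos_def)
  then show "reflexive_game (limit_game M)" by (simp add: reflexive_game_def star_game_def L_def)
qed

end
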